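(* Let $P$ be a finite poset, $\mathfrak{m}=(x_p)_{p\in P}\subseteq k[x_P]$ and $d\ge2$. Then $\mathfrak{m}^d$ is $P$-stable if and only if $P$ is a disjoint union of posets whose Hasse diagrams are rooted trees with the roots on top.
   Context: $k$ is a field and $k[x_P]$ the polynomial ring in variables $x_p$, $p\in P$. A rooted tree with the root on top means a connected poset whose Hasse diagram is a tree and which has a unique maximal element (the root). For $b\in P$, a $b$-chain is a multichain $C: p_1\le\dots\le p_r$ with $p_r\le b$; its length is $r$ and $m_C=\prod x_{p_i}$; $C$ is in a monomial $m$ if $m_C\mid m$; it is a longest $b$-chain in $m$ if no $b$-chain in $m$ is longer; it goes through $a$ if $a\le b$ and $a$ is comparable to every $p_i$. For an antichain $B$, $m_B=\prod_{b\in B}x_b$. A monomial ideal $I$ is $P$-stable if whenever $m=n\,m_B\in I$ ($n$ a monomial, $B$ an antichain) and $a\in P$ is such that for each $b\in B$ some longest $b$-chain in $m$ goes through $a$, then $n\,x_a\in I$. *)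

theory Defs
  imports "HOL-Library.Multiset"
begin

text \<open>Monomials of k[x_P] are represented by multisets over P (exponent vectors);
  the product of monomials is multiset sum, divisibility is sub-multiset.
  A monomial ideal is represented by the set of monomials it contains.\<close>

definition monomial_on :: "'a set \<Rightarrow> 'a multiset \<Rightarrow> bool" where
  "monomial_on P m \<longleftrightarrow> set_mset m \<subseteq> P"

text \<open>The monomials of the ideal m^d, where m = (x_p)_{p in P}: monomials of degree at least d.\<close>
definition max_ideal_pow :: "'a set \<Rightarrow> nat \<Rightarrow> 'a multiset set" where
  "max_ideal_pow P d = {m. monomial_on P m \<and> size m \<ge> d}"

definition antichain_on :: "'a::order set \<Rightarrow> 'a set \<Rightarrow> bool" where
  "antichain_on P B \<longleftrightarrow> B \<subseteq> P \<and> (\<forall>x\<in>B. \<forall>y\<in>B. x \<le> y \<longrightarrow> x = y)"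

definition b_chain :: "'a::order set \<Rightarrow> 'a \<Rightarrow> 'a list \<Rightarrow> bool" where
  "b_chain P b C \<longleftrightarrow> set C \<subseteq> P \<and> sorted_wrt (\<le>) C \<and> (C \<noteq> [] \<longrightarrow> last C \<le> b)"

definition chain_in :: "'a list \<Rightarrow> 'a multiset \<Rightarrow> bool" where
  "chain_in C m \<longleftrightarrow> mset C \<subseteq># m"

definition longest_b_chain_in :: "'a::order set \<Rightarrow> 'a \<Rightarrow> 'a list \<Rightarrow> 'a multiset \<Rightarrow> bool" where
  "longest_b_chain_in P b C m \<longleftrightarrow> b_chain P b C \<and> chain_in C m \<and>
     (\<forall>C'. b_chain P b C' \<and> chain_in C' m \<longrightarrow> length C' \<le> length C)"

definition goes_through :: "'a::order \<Rightarrow> 'a \<Rightarrow> 'a list \<Rightarrow> bool" where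
  "goes_through a b C \<longleftrightarrow> a \<le> b \<and> (\<forall>p\<in>set C. a \<le> p \<or> p \<le> a)"

definition P_stable :: "'a::order set \<Rightarrow> 'a multiset set \<Rightarrow> bool" where
  "P_stable P I \<longleftrightarrow>
     (\<forall>m n B a. m \<in> I \<and> monomial_on P n \<and> antichain_on P B \<and> m = n + mset_set B \<and> a \<in> P \<and>
        (\<forall>b\<in>B. \<exists>C. longest_b_chain_in P b C m \<and> goes_through a b C)
        \<longrightarrow> n + {#a#} \<in> I)"

definition covers_in :: "'a::order set \<Rightarrow> 'a \<Rightarrow> 'a \<Rightarrow> bool" where
  "covers_in S p q \<longleftrightarrow> p \<in> S \<and> q \<in> S \<and> p < q \<and> \<not> (\<exists>r\<in>S. p < r \<and> r < q)"

definition hasse_adj :: "'a::order set \<Rightarrow> 'a \<Rightarrow> 'a \<Rightarrow> bool" where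
  "hasse_adj S p q \<longleftrightarrow> covers_in S p q \<or> covers_in S q p"

definition hasse_walk :: "'a::order set \<Rightarrow> 'a list \<Rightarrow> bool" where
  "hasse_walk S vs \<longleftrightarrow> vs \<noteq> [] \<and> set vs \<subseteq> S \<and>
     (\<forall>i. Suc i < length vs \<longrightarrow> hasse_adj S (vs ! i) (vs ! Suc i))"

definition hasse_is_tree :: "'a::order set \<Rightarrow> bool" where
  "hasse_is_tree S \<longleftrightarrow> S \<noteq> {} \<and>
     (\<forall>p\<in>S. \<forall>q\<in>S. \<exists>vs. hasse_walk S vs \<and> hd vs = p \<and> last vs = q) \<and>
     \<not> (\<exists>vs. hasse_walk S vs \<and> distinct vs \<and> length vs \<ge> 3 \<and> hasse_adj S (last vs) (hd vs))"

definition connected_poset :: "'a::order set \<Rightarrow> bool" where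
  "connected_poset S \<longleftrightarrow> S \<noteq> {} \<and>
     (\<forall>p\<in>S. \<forall>q\<in>S. \<exists>vs. vs \<noteq> [] \<and> set vs \<subseteq> S \<and> hd vs = p \<and> last vs = q \<and>
        (\<forall>i. Suc i < length vs \<longrightarrow> (vs ! i \<le> vs ! Suc i \<or> vs ! Suc i \<le> vs ! i)))"

definition rooted_tree_root_top :: "'a::order set \<Rightarrow> bool" where
  "rooted_tree_root_top S \<longleftrightarrow> connected_poset S \<and> hasse_is_tree S \<and>
     (\<exists>!r. r \<in> S \<and> (\<forall>q\<in>S. \<not> r < q))"

definition disjoint_union_rooted_trees :: "'a::order set \<Rightarrow> bool" where
  "disjoint_union_rooted_trees P \<longleftrightarrow>
     (\<exists>Q. \<Union>Q = P \<and> (\<forall>S\<in>Q. \<forall>T\<in>Q. S \<noteq> T \<longrightarrow> S \<inter> T = {}) \<and>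
          (\<forall>S\<in>Q. \<forall>T\<in>Q. S \<noteq> T \<longrightarrow> (\<forall>x\<in>S. \<forall>y\<in>T. \<not> x \<le> y)) \<and>
          (\<forall>S\<in>Q. rooted_tree_root_top S))"

end

theory Submission
  imports Defs
begin

definition UC :: "'a::order set \<Rightarrow> bool" where
  "UC P \<longleftrightarrow> (\<forall>a\<in>P. \<forall>b1\<in>P. \<forall>b2\<in>P. a \<le> b1 \<longrightarrow> a \<le> b2 \<longrightarrow> b1 \<le> b2 \<or> b2 \<le> b1)"

lemma walk_iff:
  "hasse_walk S vs \<longleftrightarrow> vs \<noteq> [] \<and> set vs \<subseteq> S \<and> successively (hasse_adj S) vs"
  unfolding hasse_walk_def successively_conv_nth by blast

lemma hasse_adj_sym: "hasse_adj S x y \<longleftrightarrow> hasse_adj S y x"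
  unfolding hasse_adj_def by blast

lemma walk_rev: "hasse_walk S vs \<Longrightarrow> hasse_walk S (rev vs)"
  unfolding walk_iff by (simp add: hasse_adj_sym)

lemma walk_join:
  assumes "hasse_walk S xs" "hasse_walk S ys" "last xs = hd ys"
  shows "hasse_walk S (xs @ tl ys) \<and> hd (xs @ tl ys) = hd xs \<and> last (xs @ tl ys) = last ys"
proof -
  from assms(2) obtain y ys' where ys: "ys = y # ys'" unfolding walk_iff by (cases ys) auto
  show ?thesis
    using assms unfolding walk_iff ys
    by (auto simp: successively_append_iff successively_Cons)
qed

lemma sorted_last: "sorted_wrt (\<le>) xs \<Longrightarrow> x \<in> set xs \<Longrightarrow> (x::'a::order) \<le> last xs"
proof (induction xs)
  case (Cons a xs)
  show ?case
  proof (cases "xs = []")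
    case True then show ?thesis using Cons by simp
  next
    case False
    then have "a \<le> last xs" using Cons.prems by simp
    then show ?thesis using Cons False by auto
  qed
qed simp

lemma sorted_less_distinct: "sorted_wrt (<) (xs::'a::order list) \<Longrightarrow> distinct xs"
  by (induction xs) auto

lemma up_chain:
  fixes S :: "'a::order set"
  assumes "finite S"
  shows "p \<in> S \<Longrightarrow> q \<in> S \<Longrightarrow> p \<le> q \<Longrightarrow> \<exists>vs. vs \<noteq> [] \<and> hd vs = p \<and> last vs = q \<and>
     set vs \<subseteq> {x\<in>S. p \<le> x \<and> x \<le> q} \<and> sorted_wrt (<) vs \<and> successively (covers_in S) vs"
proof (induction "card {x\<in>S. p \<le> x \<and> x \<le> q}" arbitrary: p rule: less_induct)
  case less
  show ?case
  proof (cases "p = q")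
    case True
    then show ?thesis using less by (intro exI[of _ "[p]"]) auto
  next
    case False
    define A where "A = {x\<in>S. p < x \<and> x \<le> q}"
    have "q \<in> A" using less False by (auto simp: A_def)
    moreover have "finite A" using assms by (auto simp: A_def)
    ultimately obtain c where c: "c \<in> A" "\<forall>b\<in>A. b \<le> c \<longrightarrow> c = b"
      using finite_has_minimal[of A] by blast
    have cov: "covers_in S p c" unfolding covers_in_def
    proof (intro conjI)
      show "\<not> (\<exists>r\<in>S. p < r \<and> r < c)"
      proof
        assume "\<exists>r\<in>S. p < r \<and> r < c"
        then obtain r where r: "r \<in> S" "p < r" "r < c" by blast
        then have "r \<in> A" using c(1) unfolding A_def by auto
        then show False using c(2) r by auto
      qed
    qed (use c less in \<open>auto simp: A_def\<close>)
    have sub: "{x\<in>S. c \<le> x \<and> x \<le> q} \<subset> {x\<in>S. p \<le> x \<and> x \<le> q}"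
    proof -
      have "p \<in> {x\<in>S. p \<le> x \<and> x \<le> q}" "p \<notin> {x\<in>S. c \<le> x \<and> x \<le> q}"
        using c less by (auto simp: A_def)
      moreover have "{x\<in>S. c \<le> x \<and> x \<le> q} \<subseteq> {x\<in>S. p \<le> x \<and> x \<le> q}"
        using c by (auto simp: A_def)
      ultimately show ?thesis by blast
    qed
    have "card {x\<in>S. c \<le> x \<and> x \<le> q} < card {x\<in>S. p \<le> x \<and> x \<le> q}"
      using sub assms by (intro psubset_card_mono) auto
    then obtain vs where vs: "vs \<noteq> []" "hd vs = c" "last vs = q"
      "set vs \<subseteq> {x\<in>S. c \<le> x \<and> x \<le> q}" "sorted_wrt (<) vs" "successively (covers_in S) vs"
    proof -
      have "c \<in> S" "c \<le> q" using c by (auto simp: A_def)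
      from less.hyps[OF \<open>card _ < _\<close> this(1) less.prems(2) this(2)] that show thesis by blast
    qed
    show ?thesis
    proof (intro exI[of _ "p # vs"] conjI)
      show "set (p # vs) \<subseteq> {x\<in>S. p \<le> x \<and> x \<le> q}" using vs less c by (auto simp: A_def)
      show "sorted_wrt (<) (p # vs)" using vs c by (auto simp: A_def intro: less_le_trans)
      show "successively (covers_in S) (p # vs)" using vs cov by (simp add: successively_Cons)
    qed (use vs in auto)
  qed
qed

lemma b_chain_le: "b_chain P b C \<Longrightarrow> x \<in> set C \<Longrightarrow> x \<le> b"
proof -
  assume a: "b_chain P b C" "x \<in> set C"
  then have "C \<noteq> []" by auto
  then have "x \<le> last C" "last C \<le> b" using a sorted_last[of C x] unfolding b_chain_def by auto
  then show ?thesis by (rule order.trans)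
qed

lemma len_le_count:
  assumes "set C \<subseteq> {c}" "mset C \<subseteq># M"
  shows "length C \<le> count M c"
proof -
  have "count (mset C) c = length C"
    using assms(1) by (induction C) auto
  then show ?thesis using assms(2) by (metis mset_subset_eq_count)
qed

lemma stable_UC:
  fixes P :: "'a::order set"
  assumes st: "P_stable P (max_ideal_pow P d)" and d: "d \<ge> 2"
  shows "UC P"
proof (rule ccontr)
  assume "\<not> UC P"
  then obtain a b1 b2 where ab: "a \<in> P" "b1 \<in> P" "b2 \<in> P" "a \<le> b1" "a \<le> b2"
    "\<not> b1 \<le> b2" "\<not> b2 \<le> b1" unfolding UC_def by blast
  then have ne: "b1 \<noteq> b2" by auto
  define m where "m = replicate_mset (d - 1) b1 + {#b2#}"
  define n where "n = replicate_mset (d - 2) b1"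
  define B where "B = {b1, b2}"
  obtain k where k: "d = Suc (Suc k)" using d by (metis add_2_eq_Suc le_Suc_ex)
  have msB: "mset_set B = {#b1, b2#}" using ne unfolding B_def by simp
  have mB: "m = n + mset_set B"
    unfolding msB m_def n_def k by simp
  have mI: "m \<in> max_ideal_pow P d"
    using ab unfolding m_def max_ideal_pow_def monomial_on_def k by auto
  have nmon: "monomial_on P n" using ab unfolding n_def monomial_on_def by auto
  have anti: "antichain_on P B" using ab unfolding B_def antichain_on_def by auto
  have cb1: "count m b1 = d - 1" "count m b2 = 1" using ne unfolding m_def by auto
  have ch: "\<forall>b\<in>B. \<exists>C. longest_b_chain_in P b C m \<and> goes_through a b C"
  proof
    fix b assume "b \<in> B"
    then consider "b = b1" | "b = b2" unfolding B_def by auto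
    then show "\<exists>C. longest_b_chain_in P b C m \<and> goes_through a b C"
    proof cases
      case 1
      show ?thesis
      proof (intro exI[of _ "replicate (d - 1) b1"] conjI)
        show "goes_through a b (replicate (d - 1) b1)"
          using ab 1 unfolding goes_through_def by auto
        show "longest_b_chain_in P b (replicate (d - 1) b1) m"
          unfolding longest_b_chain_in_def
        proof (intro conjI allI impI)
          show "b_chain P b (replicate (d - 1) b1)" using ab 1
            unfolding b_chain_def by (auto simp: sorted_wrt_iff_nth_less)
          show "chain_in (replicate (d - 1) b1) m" unfolding chain_in_def m_def by auto
          fix C' assume C': "b_chain P b C' \<and> chain_in C' m"
          have "set C' \<subseteq> {b1}"
          proof
            fix x assume x: "x \<in> set C'"
            then have "x \<le> b1" using b_chain_le C' 1 by blast
            moreover have "x \<in># m" using C' x unfolding chain_in_def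
              by (meson mset_subset_eqD in_multiset_in_set)
            ultimately show "x \<in> {b1}" using ab unfolding m_def k by (auto split: if_splits)
          qed
          then show "length C' \<le> length (replicate (d - 1) b1)"
            using len_le_count[of C' b1 m] C' cb1 unfolding chain_in_def by auto
        qed
      qed
    next
      case 2
      show ?thesis
      proof (intro exI[of _ "[b2]"] conjI)
        show "goes_through a b [b2]"
          using ab 2 unfolding goes_through_def by auto
        show "longest_b_chain_in P b [b2] m"
          unfolding longest_b_chain_in_def
        proof (intro conjI allI impI)
          show "b_chain P b [b2]" using ab 2 unfolding b_chain_def by auto
          show "chain_in [b2] m" unfolding chain_in_def m_def by auto
          fix C' assume C': "b_chain P b C' \<and> chain_in C' m"
          have "set C' \<subseteq> {b2}"
          proof
            fix x assume x: "x \<in> set C'"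
            then have "x \<le> b2" using b_chain_le C' 2 by blast
            moreover have "x \<in># m" using C' x unfolding chain_in_def
              by (meson mset_subset_eqD in_multiset_in_set)
            ultimately show "x \<in> {b2}" using ab unfolding m_def k by (auto split: if_splits)
          qed
          then show "length C' \<le> length [b2]"
            using len_le_count[of C' b2 m] C' cb1 unfolding chain_in_def by auto
        qed
      qed
    qed
  qed
  have "n + {#a#} \<in> max_ideal_pow P d"
    using st mI nmon anti mB ab(1) ch unfolding P_stable_def by blast
  then show False using d unfolding n_def max_ideal_pow_def by auto
qed

lemma UC_stable:
  fixes P :: "'a::order set"
  assumes uc: "UC P"
  shows "P_stable P (max_ideal_pow P d)"
  unfolding P_stable_def
proof (intro allI impI)
  fix m n B a
  assume H: "m \<in> max_ideal_pow P d \<and> monomial_on P n \<and> antichain_on P B \<and> m = n + mset_set B \<and>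
       a \<in> P \<and> (\<forall>b\<in>B. \<exists>C. longest_b_chain_in P b C m \<and> goes_through a b C)"
  have le: "\<forall>b\<in>B. a \<le> b"
  proof
    fix b assume "b \<in> B"
    then obtain C where "goes_through a b C" using H by blast
    then show "a \<le> b" unfolding goes_through_def by blast
  qed
  have anti: "antichain_on P B" and mI: "m \<in> max_ideal_pow P d" and mn: "m = n + mset_set B"
    and nm: "monomial_on P n" and aP: "a \<in> P" using H by blast+
  have "size (mset_set B) \<le> 1"
  proof (cases "finite B")
    case True
    have "\<forall>x\<in>B. \<forall>y\<in>B. x = y"
    proof (intro ballI)
      fix x y assume xy: "x \<in> B" "y \<in> B"
      have "x \<in> P" "y \<in> P" using xy anti unfolding antichain_on_def by auto
      then have "x \<le> y \<or> y \<le> x" using uc le xy aP unfolding UC_def by blast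
      then show "x = y" using xy anti unfolding antichain_on_def by (metis order.antisym)
    qed
    then have "card B \<le> 1" using card_le_Suc0_iff_eq[OF True] by simp
    then show ?thesis by simp
  qed simp
  then show "n + {#a#} \<in> max_ideal_pow P d"
  proof -
    have "d \<le> size m" using mI unfolding max_ideal_pow_def by auto
    also have "size m = size n + size (mset_set B)" using mn by simp
    finally have "d \<le> size (n + {#a#})" using \<open>size (mset_set B) \<le> 1\<close> by simp
    moreover have "monomial_on P (n + {#a#})" using nm aP unfolding monomial_on_def by auto
    ultimately show ?thesis unfolding max_ideal_pow_def by auto
  qed
qed

lemma cyc_adj:
  assumes "hasse_walk S vs" "hasse_adj S (last vs) (hd vs)" "j < length vs"
  shows "hasse_adj S (vs ! j) (vs ! (if Suc j = length vs then 0 else Suc j))"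
proof (cases "Suc j = length vs")
  case True
  then have "j = length vs - 1" by simp
  then have "vs ! j = last vs" using assms(1) unfolding hasse_walk_def by (simp add: last_conv_nth)
  moreover have "vs ! 0 = hd vs" using assms(1) unfolding hasse_walk_def by (simp add: hd_conv_nth)
  ultimately show ?thesis using True assms(2) by simp
next
  case False
  then show ?thesis using assms(1,3) unfolding hasse_walk_def by auto
qed

lemma UC_acyclic:
  fixes S :: "'a::order set"
  assumes uc: "UC S" and w: "hasse_walk S vs" and dist: "distinct vs" and len: "length vs \<ge> 3"
    and cl: "hasse_adj S (last vs) (hd vs)"
  shows False
proof -
  define L where "L = length vs"
  obtain v where v: "v \<in> set vs" "\<forall>b\<in>set vs. b \<le> v \<longrightarrow> v = b"
    using finite_has_minimal[of "set vs"] len by force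
  obtain i where i: "i < L" "vs ! i = v" using v(1) unfolding L_def by (metis in_set_conv_nth)
  define j0 where "j0 = (if i = 0 then L - 1 else i - 1)"
  define j1 where "j1 = (if Suc i = L then 0 else Suc i)"
  have j0L: "j0 < L" and j1L: "j1 < L" using i len unfolding j0_def j1_def L_def by auto
  have j0s: "(if Suc j0 = L then 0 else Suc j0) = i" using i len unfolding j0_def L_def by auto
  have ne: "j0 \<noteq> i" "j1 \<noteq> i" "j0 \<noteq> j1" using i len unfolding j0_def j1_def L_def by auto
  define u where "u = vs ! j0"
  define x where "x = vs ! j1"
  have a1: "hasse_adj S u v" using cyc_adj[OF w cl, of j0] j0L j0s i unfolding u_def L_def by simp
  have a2: "hasse_adj S v x" using cyc_adj[OF w cl, of i] i unfolding x_def j1_def L_def by simp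
  have uv: "u \<noteq> v" "x \<noteq> v" "u \<noteq> x" using ne dist i j0L j1L unfolding u_def x_def L_def
    by (auto simp: nth_eq_iff_index_eq)
  have uin: "u \<in> set vs" "x \<in> set vs" using j0L j1L unfolding u_def x_def L_def by auto
  have c1: "covers_in S v u"
    using a1 v(2) uin uv unfolding hasse_adj_def covers_in_def by auto
  have c2: "covers_in S v x"
    using a2 v(2) uin uv unfolding hasse_adj_def covers_in_def by auto
  have "v \<in> S" "u \<in> S" "x \<in> S" "v \<le> u" "v \<le> x" using c1 c2 unfolding covers_in_def by auto
  then have "u \<le> x \<or> x \<le> u" using uc unfolding UC_def by blast
  then show False using c1 c2 uv unfolding covers_in_def by (auto simp: order.order_iff_strict)
qed

lemma up_walk:
  fixes S :: "'a::order set"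
  assumes "finite S" "p \<in> S" "q \<in> S" "p \<le> q"
  shows "\<exists>vs. hasse_walk S vs \<and> hd vs = p \<and> last vs = q"
proof -
  obtain vs where vs: "vs \<noteq> []" "hd vs = p" "last vs = q" "set vs \<subseteq> {x\<in>S. p \<le> x \<and> x \<le> q}"
    "successively (covers_in S) vs" using up_chain[OF assms] by blast
  have "successively (hasse_adj S) vs"
    using vs(5) by (rule successively_mono) (auto simp: hasse_adj_def)
  then show ?thesis using vs unfolding walk_iff by auto
qed

lemma top_connected:
  fixes S :: "'a::order set"
  assumes "finite S" "r \<in> S" "\<forall>p\<in>S. p \<le> r" "p \<in> S" "q \<in> S"
  shows "\<exists>vs. hasse_walk S vs \<and> hd vs = p \<and> last vs = q"
proof -
  obtain xs where xs: "hasse_walk S xs" "hd xs = p" "last xs = r" using up_walk assms by metis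
  obtain ys where ys: "hasse_walk S ys" "hd ys = q" "last ys = r" using up_walk assms by metis
  have r: "hasse_walk S (rev ys)" "hd (rev ys) = r" "last (rev ys) = q"
    using walk_rev[OF ys(1)] ys ys(1) unfolding walk_iff by (auto simp: hd_rev last_rev)
  show ?thesis using walk_join[OF xs(1) r(1)] xs r by (intro exI[of _ "xs @ tl (rev ys)"]) auto
qed

lemma UC_forest:
  fixes P :: "'a::order set"
  assumes fin: "finite P" and uc: "UC P"
  shows "disjoint_union_rooted_trees P"
proof -
  define R where "R = {r\<in>P. \<forall>q\<in>P. \<not> r < q}"
  define blk where "blk r = {p\<in>P. p \<le> r}" for r
  define Q where "Q = blk ` R"
  have maxex: "\<exists>r\<in>R. p \<le> r" if pP: "p \<in> P" for p
  proof -
    obtain m where "m \<in> P" "p \<le> m" "\<forall>b\<in>P. m \<le> b \<longrightarrow> m = b"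
      using finite_has_maximal2[OF fin pP] by blast
    then show ?thesis unfolding R_def by (auto simp: order.strict_iff_order)
  qed
  have Rsame: "r1 = r2" if "r1 \<in> R" "r2 \<in> R" "x \<in> P" "x \<le> r1" "x \<le> r2" for r1 r2 x
  proof -
    have "r1 \<le> r2 \<or> r2 \<le> r1" using uc that unfolding UC_def R_def by blast
    then show ?thesis using that unfolding R_def by (auto simp: order.order_iff_strict)
  qed
  have U: "\<Union>Q = P" using maxex unfolding Q_def blk_def by auto
  have inc: "\<forall>S\<in>Q. \<forall>T\<in>Q. S \<noteq> T \<longrightarrow> (\<forall>x\<in>S. \<forall>y\<in>T. \<not> x \<le> y)"
  proof (intro ballI impI notI)
    fix S T x y assume h: "S \<in> Q" "T \<in> Q" "S \<noteq> T" "x \<in> S" "y \<in> T" "x \<le> y"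
    then obtain r1 r2 where r: "r1 \<in> R" "r2 \<in> R" "S = blk r1" "T = blk r2" unfolding Q_def by auto
    then have "x \<in> P" "x \<le> r1" "x \<le> r2" using h unfolding blk_def by (auto intro: order.trans)
    then have "r1 = r2" using Rsame r by blast
    then show False using h r by simp
  qed
  have dis: "\<forall>S\<in>Q. \<forall>T\<in>Q. S \<noteq> T \<longrightarrow> S \<inter> T = {}"
    using inc by blast
  have tree: "rooted_tree_root_top S" if SQ: "S \<in> Q" for S
  proof -
    obtain r where r: "r \<in> R" "S = blk r" using SQ unfolding Q_def by auto
    have rS: "r \<in> S" using r unfolding R_def blk_def by auto
    have below: "\<forall>p\<in>S. p \<le> r" using r unfolding blk_def by auto
    have SP: "S \<subseteq> P" using r unfolding blk_def by auto
    have finS: "finite S" using SP fin by (rule finite_subset)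
    have ucS: "UC S" using uc SP unfolding UC_def by blast
    have conn: "connected_poset S"
      unfolding connected_poset_def
    proof (intro conjI ballI)
      show "S \<noteq> {}" using rS by auto
      fix p q assume pq: "p \<in> S" "q \<in> S"
      show "\<exists>vs. vs \<noteq> [] \<and> set vs \<subseteq> S \<and> hd vs = p \<and> last vs = q \<and>
        (\<forall>i. Suc i < length vs \<longrightarrow> vs ! i \<le> vs ! Suc i \<or> vs ! Suc i \<le> vs ! i)"
      proof (intro exI[of _ "[p, r, q]"] conjI allI impI)
        fix i assume "Suc i < length [p, r, q]"
        then have "i = 0 \<or> i = 1" by auto
        then show "[p, r, q] ! i \<le> [p, r, q] ! Suc i \<or> [p, r, q] ! Suc i \<le> [p, r, q] ! i"
          using below pq by auto
      qed (use pq rS in auto)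
    qed
    have ht: "hasse_is_tree S"
      unfolding hasse_is_tree_def
    proof (intro conjI ballI)
      show "S \<noteq> {}" using rS by auto
      fix p q assume "p \<in> S" "q \<in> S"
      then show "\<exists>vs. hasse_walk S vs \<and> hd vs = p \<and> last vs = q"
        using top_connected[OF finS rS below] by blast
    next
      show "\<not> (\<exists>vs. hasse_walk S vs \<and> distinct vs \<and> length vs \<ge> 3 \<and> hasse_adj S (last vs) (hd vs))"
        using UC_acyclic[OF ucS] by blast
    qed
    have "\<exists>!r. r \<in> S \<and> (\<forall>q\<in>S. \<not> r < q)"
    proof (rule ex1I[of _ r])
      show "r \<in> S \<and> (\<forall>q\<in>S. \<not> r < q)" using rS below by (auto dest: leD)
      fix r' assume h: "r' \<in> S \<and> (\<forall>q\<in>S. \<not> r' < q)"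
      then have "r' \<le> r" "\<not> r' < r" using rS below by auto
      then show "r' = r" using order_le_less by blast
    qed
    then show ?thesis using conn ht unfolding rooted_tree_root_top_def by blast
  qed
  have tree': "\<forall>S\<in>Q. rooted_tree_root_top S" using tree by blast
  show ?thesis unfolding disjoint_union_rooted_trees_def
    apply (rule exI[of _ Q])
    using U dis inc tree' by (intro conjI)
qed

lemma tree_UC:
  fixes S :: "'a::order set"
  assumes finS: "finite S" and rt: "rooted_tree_root_top S"
  shows "UC S"
  unfolding UC_def
proof (intro ballI impI, rule ccontr)
  fix a b1 b2 assume ab: "a \<in> S" "b1 \<in> S" "b2 \<in> S" "a \<le> b1" "a \<le> b2"
    and nc: "\<not> (b1 \<le> b2 \<or> b2 \<le> b1)"
  obtain r where r: "r \<in> S" "\<forall>q\<in>S. \<not> r < q" "\<And>r'. r' \<in> S \<Longrightarrow> (\<forall>q\<in>S. \<not> r' < q) \<Longrightarrow> r' = r"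
    using rt unfolding rooted_tree_root_top_def by blast
  have below: "x \<le> r" if xS: "x \<in> S" for x
  proof -
    obtain m where m: "m \<in> S" "x \<le> m" "\<forall>b\<in>S. m \<le> b \<longrightarrow> m = b"
      using finite_has_maximal2[OF finS xS] by blast
    have "\<forall>q\<in>S. \<not> m < q" using m(3) by (auto simp: less_le)
    then have "m = r" using r(3) m(1) by blast
    then show ?thesis using m(2) by simp
  qed
  have tree: "\<not> (\<exists>vs. hasse_walk S vs \<and> distinct vs \<and> length vs \<ge> 3 \<and> hasse_adj S (last vs) (hd vs))"
    using rt unfolding rooted_tree_root_top_def hasse_is_tree_def by blast
  define Z where "Z = {x\<in>S. x \<le> b1 \<and> x \<le> b2}"
  obtain z where z: "z \<in> Z" "\<forall>b\<in>Z. z \<le> b \<longrightarrow> z = b"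
    using finite_has_maximal2[of Z a] finS ab unfolding Z_def by auto
  have zS: "z \<in> S" "z \<le> b1" "z \<le> b2" using z unfolding Z_def by auto
  have cov: "\<exists>c. covers_in S z c \<and> c \<le> b" if bS: "b \<in> S" "z \<le> b" "z \<noteq> b" for b
  proof -
    define A where "A = {x\<in>S. z < x \<and> x \<le> b}"
    have "b \<in> A" using bS unfolding A_def by (auto simp: less_le)
    moreover have "finite A" using finS unfolding A_def by auto
    ultimately obtain c where c: "c \<in> A" "\<forall>y\<in>A. y \<le> c \<longrightarrow> c = y"
      using finite_has_minimal[of A] by blast
    have "covers_in S z c" unfolding covers_in_def
    proof (intro conjI)
      show "\<not> (\<exists>r\<in>S. z < r \<and> r < c)"
      proof
        assume "\<exists>r\<in>S. z < r \<and> r < c"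
        then obtain y where y: "y \<in> S" "z < y" "y < c" by blast
        then have "y \<in> A" using c(1) unfolding A_def by auto
        then show False using c(2) y by auto
      qed
    qed (use c zS in \<open>auto simp: A_def\<close>)
    then show ?thesis using c unfolding A_def by auto
  qed
  have "z \<noteq> b1" using zS nc by auto
  then obtain c1 where c1: "covers_in S z c1" "c1 \<le> b1" using cov ab zS by blast
  have "z \<noteq> b2" using zS nc by auto
  then obtain c2 where c2: "covers_in S z c2" "c2 \<le> b2" using cov ab zS by blast
  have c12: "c1 \<noteq> c2"
  proof
    assume "c1 = c2"
    then have "c1 \<in> Z" using c1 c2 unfolding Z_def covers_in_def by auto
    moreover have "z < c1" using c1 unfolding covers_in_def by auto
    ultimately show False using z(2) by auto
  qed
  have c1S: "c1 \<in> S" "z < c1" and c2S: "c2 \<in> S" "z < c2" using c1 c2 unfolding covers_in_def by auto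
  define U where "U = {x\<in>S. c1 \<le> x \<and> c2 \<le> x}"
  have "r \<in> U" unfolding U_def using below[OF c1S(1)] below[OF c2S(1)] r(1) by simp
  then obtain w where w: "w \<in> U" "\<forall>y\<in>U. y \<le> w \<longrightarrow> w = y"
    using finite_has_minimal[of U] finS unfolding U_def by auto
  have wS: "w \<in> S" "c1 \<le> w" "c2 \<le> w" using w unfolding U_def by auto
  obtain ch1 where ch1: "ch1 \<noteq> []" "hd ch1 = c1" "last ch1 = w" "set ch1 \<subseteq> {x\<in>S. c1 \<le> x \<and> x \<le> w}"
    "sorted_wrt (<) ch1" "successively (covers_in S) ch1"
    using up_chain[OF finS c1S(1) wS(1) wS(2)] by blast
  obtain ch2 where ch2: "ch2 \<noteq> []" "hd ch2 = c2" "last ch2 = w" "set ch2 \<subseteq> {x\<in>S. c2 \<le> x \<and> x \<le> w}"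
    "sorted_wrt (<) ch2" "successively (covers_in S) ch2"
    using up_chain[OF finS c2S(1) wS(1) wS(3)] by blast
  have wk1: "hasse_walk S ch1"
    using ch1 successively_mono[OF ch1(6), of "hasse_adj S"] unfolding walk_iff hasse_adj_def by auto
  have wk2: "hasse_walk S ch2"
    using ch2 successively_mono[OF ch2(6), of "hasse_adj S"] unfolding walk_iff hasse_adj_def by auto
  have wr: "hasse_walk S (rev ch2)" "hd (rev ch2) = w" "last (rev ch2) = c2"
    using walk_rev[OF wk2] ch2 by (auto simp: hd_rev last_rev)
  define tl2 where "tl2 = tl (rev ch2)"
  have rv: "rev ch2 = w # tl2" using wr(2) ch2(1) unfolding tl2_def by (cases "rev ch2") auto
  have d2: "distinct (rev ch2)" using sorted_less_distinct[OF ch2(5)] by simp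
  have J: "hasse_walk S (ch1 @ tl2) \<and> hd (ch1 @ tl2) = c1 \<and> last (ch1 @ tl2) = c2"
    using walk_join[OF wk1 wr(1)] ch1 wr unfolding tl2_def by auto
  define vs where "vs = z # ch1 @ tl2"
  have wv: "hasse_walk S vs"
  proof -
    have "hasse_adj S z (hd (ch1 @ tl2))" using J c1 unfolding hasse_adj_def by auto
    then show ?thesis using J zS unfolding vs_def walk_iff by (auto simp: successively_Cons)
  qed
  have set2: "set tl2 \<subseteq> {x\<in>S. c2 \<le> x \<and> x \<le> w}" "w \<notin> set tl2"
  proof -
    have "set (rev ch2) = insert w (set tl2)" using rv by simp
    then have "set tl2 \<subseteq> set ch2" by auto
    then show "set tl2 \<subseteq> {x\<in>S. c2 \<le> x \<and> x \<le> w}" using ch2(4) by blast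
    show "w \<notin> set tl2" using d2 rv by (metis distinct.simps(2))
  qed
  have dv: "distinct vs"
  proof -
    have "distinct ch1" using sorted_less_distinct[OF ch1(5)] .
    moreover have "distinct tl2" using d2 rv by (metis distinct.simps(2))
    moreover have "set ch1 \<inter> set tl2 = {}"
    proof (rule ccontr)
      assume "set ch1 \<inter> set tl2 \<noteq> {}"
      then obtain y where y: "y \<in> set ch1" "y \<in> set tl2" by blast
      then have "y \<in> U" "y \<le> w" using ch1(4) set2 unfolding U_def by auto
      then have "y = w" using w(2) by auto
      then show False using y set2 by auto
    qed
    moreover have "z \<notin> set ch1" using ch1(4) c1S by (auto dest: leD)
    moreover have "z \<notin> set tl2" using set2 c2S by (auto dest: leD)
    ultimately show ?thesis unfolding vs_def by auto
  qed
  have lv: "length vs \<ge> 3"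
  proof -
    have "c1 \<in> set vs" using ch1 unfolding vs_def by (metis Un_iff hd_in_set list.set_intros(2) set_append)
    moreover have "c2 \<in> set vs" using J unfolding vs_def
      by (metis Nil_is_append_conv ch1(1) last_in_set list.set_intros(2))
    moreover have "z \<in> set vs" unfolding vs_def by simp
    ultimately have "{z, c1, c2} \<subseteq> set vs" by auto
    then have "card {z, c1, c2} \<le> card (set vs)" by (simp add: card_mono)
    moreover have "card {z, c1, c2} = 3"
    proof -
      have "z \<noteq> c1" "z \<noteq> c2" using c1S c2S by auto
      then show ?thesis using c12 by simp
    qed
    ultimately show ?thesis using distinct_card[OF dv] by simp
  qed
  have cl: "hasse_adj S (last vs) (hd vs)"
  proof -
    have "last vs = c2" using J unfolding vs_def by (metis Nil_is_append_conv ch1(1) last_ConsR)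
    then show ?thesis using c2 unfolding vs_def hasse_adj_def by auto
  qed
  show False using tree wv dv lv cl by blast
qed

lemma forest_UC:
  fixes P :: "'a::order set"
  assumes fin: "finite P" and f: "disjoint_union_rooted_trees P"
  shows "UC P"
proof -
  obtain Q where Q0: "\<Union>Q = P \<and> (\<forall>S\<in>Q. \<forall>T\<in>Q. S \<noteq> T \<longrightarrow> S \<inter> T = {}) \<and>
          (\<forall>S\<in>Q. \<forall>T\<in>Q. S \<noteq> T \<longrightarrow> (\<forall>x\<in>S. \<forall>y\<in>T. \<not> x \<le> y)) \<and>
          (\<forall>S\<in>Q. rooted_tree_root_top S)" using f unfolding disjoint_union_rooted_trees_def by (elim exE)
  have Q: "\<Union>Q = P" "\<forall>S\<in>Q. \<forall>T\<in>Q. S \<noteq> T \<longrightarrow> (\<forall>x\<in>S. \<forall>y\<in>T. \<not> x \<le> y)"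
    "\<forall>S\<in>Q. rooted_tree_root_top S" using Q0 by simp_all
  show ?thesis unfolding UC_def
  proof (intro ballI impI)
    fix a b1 b2 assume ab: "a \<in> P" "b1 \<in> P" "b2 \<in> P" "a \<le> b1" "a \<le> b2"
    obtain S where S: "S \<in> Q" "a \<in> S" using ab Q(1) by blast
    obtain T1 where T1: "T1 \<in> Q" "b1 \<in> T1" using ab Q(1) by blast
    obtain T2 where T2: "T2 \<in> Q" "b2 \<in> T2" using ab Q(1) by blast
    have "T1 = S" using Q(2) S T1 ab by blast
    moreover have "T2 = S" using Q(2) S T2 ab by blast
    moreover have "finite S" using S Q(1) fin by (metis Union_upper finite_subset)
    ultimately have "UC S" using tree_UC Q(3) S by blast
    then show "b1 \<le> b2 \<or> b2 \<le> b1" using S T1 T2 ab \<open>T1 = S\<close> \<open>T2 = S\<close> unfolding UC_def by blast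
  qed
qed

theorem proposition3p16:
  fixes P :: "'a::order set" and d :: nat
  assumes "finite P" and "d \<ge> 2"
  shows "P_stable P (max_ideal_pow P d) \<longleftrightarrow> disjoint_union_rooted_trees P"
  using stable_UC[OF _ assms(2)] UC_stable UC_forest[OF assms(1)] forest_UC[OF assms(1)] by blast

end
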